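(* Let $n\ge2$ and $(\mathbb G,\lVert\cdot\rVert_{\mathrm{sf}})$ be a sub-Finsler free-Carnot group of step 2 and rank $n$, $\mathbb G=\mathbb R^n\times\bigwedge^2(\mathbb R^n)$, with an adequate scalar product, induced distance $d_{\mathrm{eu}}$ and unit sphere $\mathbb S_{\mathrm{eu}}$ centered at $0_{\mathbb G}$. There exists a constant $K$ such that for every $\varepsilon>0$, every sub-Finsler geodesic $\gamma:[0,1]\to\mathbb G$ with $\gamma(0)=0_{\mathbb G}$ and $\gamma(1)\in\mathbb S_{\mathrm{eu}}$, and every linear subspace $\mathcal P\le\mathbb R^n$: if $d_{\mathrm{eu}}(\pi(\gamma(t)),\mathcal P)<\varepsilon$ for every $t\in[0,1]$, then $d_{\mathrm{eu}}(\gamma(1),\mathcal P\times\bigwedge^2(\mathcal P))<K\varepsilon$.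
   Context: Group law: $(x_1,Y_1)*(x_2,Y_2)=(x_1+x_2,Y_1+Y_2+\tfrac12x_1\wedge x_2)$, $v\wedge w=v\otimes w-w\otimes v$; $\pi(x,Y)=x$. A sub-Finsler structure is a norm on $\mathbb R^n$ extended left-invariantly to the horizontal distribution; horizontal curves from $0_{\mathbb G}$ have the form $\gamma_u(t)=\int_0^tu+\tfrac12\int_0^t(\int_0^su)\wedge u(s)\,ds$ with $u\in L^1([0,1],\mathbb R^n)$ and length $\int_0^1\lVert u\rVert_{\mathrm{sf}}$; $d_{\mathrm{cc}}$ is the infimum of lengths of horizontal curves joining two points, and a geodesic between $g,h$ is a horizontal curve from $g$ to $h$ of length $d_{\mathrm{cc}}(g,h)$. Adequate scalar product: $\mathbb R^n\perp\bigwedge^2(\mathbb R^n)$ and $\langle v_1\wedge w_1,v_2\wedge w_2\rangle=\langle v_1,v_2\rangle\langle w_1,w_2\rangle-\langle v_1,w_2\rangle\langle w_1,v_2\rangle$. *)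

theory Defs
  imports "HOL-Analysis.Analysis"
begin

text \<open>Model of the free step-2 Carnot group of rank n:
  points are pairs (x, Y) with x in R^n and Y an antisymmetric n x n matrix,
  the matrix model of the second exterior power, where
  v wedge w = v tensor w - w tensor v.\<close>

type_synonym ('n) grp = "(real ^ 'n) \<times> (real ^ 'n ^ 'n)"

definition wedge :: "real ^ ('n::finite) \<Rightarrow> real ^ ('n::finite) \<Rightarrow> real ^ 'n ^ 'n" where
  "wedge v w = (\<chi> i j. v $ i * w $ j - w $ i * v $ j)"

definition antisym_mat :: "real ^ 'n ^ 'n \<Rightarrow> bool" where
  "antisym_mat Y \<longleftrightarrow> (\<forall>i j. Y $ i $ j = - (Y $ j $ i))"

definition carrierG :: "('n::finite) grp set" where
  "carrierG = {p. antisym_mat (snd p)}"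

definition gmul :: "('n::finite) grp \<Rightarrow> 'n grp \<Rightarrow> 'n grp" where
  "gmul p q = (fst p + fst q, snd p + snd q + (1/2) *\<^sub>R wedge (fst p) (fst q))"

definition is_norm :: "(real ^ ('n::finite) \<Rightarrow> real) \<Rightarrow> bool" where
  "is_norm N \<longleftrightarrow> (\<forall>x. N x \<ge> 0) \<and> (\<forall>x. N x = 0 \<longleftrightarrow> x = 0)
     \<and> (\<forall>c x. N (c *\<^sub>R x) = \<bar>c\<bar> * N x) \<and> (\<forall>x y. N (x + y) \<le> N x + N y)"

text \<open>Horizontal curve from the identity with control u.\<close>
definition hcurve :: "(real \<Rightarrow> real ^ 'n) \<Rightarrow> real \<Rightarrow> 'n grp" where
  "hcurve u t = (integral {0..t} u,
     (1/2) *\<^sub>R integral {0..t} (\<lambda>s. wedge (integral {0..s} u) (u s)))"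

definition admissible :: "(real \<Rightarrow> real ^ 'n) \<Rightarrow> bool" where
  "admissible u \<longleftrightarrow> u absolutely_integrable_on {0..1}"

definition sf_length :: "(real ^ ('n::finite) \<Rightarrow> real) \<Rightarrow> (real \<Rightarrow> real ^ 'n) \<Rightarrow> real" where
  "sf_length N u = integral {0..1} (\<lambda>t. N (u t))"

text \<open>Horizontal curves from g are left translates g * gamma_u.\<close>
definition dcc :: "(real ^ ('n::finite) \<Rightarrow> real) \<Rightarrow> 'n grp \<Rightarrow> 'n grp \<Rightarrow> real" where
  "dcc N g h = Inf {sf_length N u | u. admissible u \<and> gmul g (hcurve u 1) = h}"

definition is_geodesic :: "(real ^ ('n::finite) \<Rightarrow> real) \<Rightarrow> 'n grp \<Rightarrow> 'n grp \<Rightarrow> (real \<Rightarrow> 'n grp) \<Rightarrow> bool" where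
  "is_geodesic N g h \<gamma> \<longleftrightarrow> (\<exists>u. admissible u \<and> (\<forall>t\<in>{0..1}. \<gamma> t = gmul g (hcurve u t))
      \<and> gmul g (hcurve u 1) = h \<and> sf_length N u = dcc N g h)"

definition adequate_ip :: "(('n::finite) grp \<Rightarrow> 'n grp \<Rightarrow> real) \<Rightarrow> bool" where
  "adequate_ip ip \<longleftrightarrow>
     (\<forall>q. linear (\<lambda>p. ip p q)) \<and> (\<forall>p q. ip p q = ip q p)
     \<and> (\<forall>p\<in>carrierG. p \<noteq> 0 \<longrightarrow> ip p p > 0)
     \<and> (\<forall>x Y. antisym_mat Y \<longrightarrow> ip (x, 0) (0, Y) = 0)
     \<and> (\<forall>v1 w1 v2 w2. ip (0, wedge v1 w1) (0, wedge v2 w2) =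
          ip (v1, 0) (v2, 0) * ip (w1, 0) (w2, 0) - ip (v1, 0) (w2, 0) * ip (w1, 0) (v2, 0))"

definition d_eu :: "(('n::finite) grp \<Rightarrow> 'n grp \<Rightarrow> real) \<Rightarrow> 'n grp \<Rightarrow> 'n grp \<Rightarrow> real" where
  "d_eu ip p q = sqrt (ip (p - q) (p - q))"

definition setdist_eu :: "(('n::finite) grp \<Rightarrow> 'n grp \<Rightarrow> real) \<Rightarrow> 'n grp \<Rightarrow> 'n grp set \<Rightarrow> real" where
  "setdist_eu ip p S = Inf {d_eu ip p q | q. q \<in> S}"

definition hdist_eu :: "(('n::finite) grp \<Rightarrow> 'n grp \<Rightarrow> real) \<Rightarrow> real ^ ('n::finite) \<Rightarrow> (real ^ 'n) set \<Rightarrow> real" where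
  "hdist_eu ip x P = Inf {d_eu ip (x, 0) (y, 0) | y. y \<in> P}"

definition proj :: "('n::finite) grp \<Rightarrow> real ^ 'n" where
  "proj p = fst p"

definition layer_sub :: "(real ^ 'n) set \<Rightarrow> 'n grp set" where
  "layer_sub P = {(x, Y). x \<in> P \<and> Y \<in> span {wedge v w | v w. v \<in> P \<and> w \<in> P}}"

end

theory Submission
  imports Defs
begin

lemma sigma_finite_completion:
  assumes "sigma_finite_measure M" shows "sigma_finite_measure (completion M)"
proof -
  obtain A where A: "countable A" "A \<subseteq> sets M" "\<Union>A = space M" "\<forall>a\<in>A. emeasure M a \<noteq> \<infinity>"
    using sigma_finite_measure.sigma_finite_countable[OF assms] by blast
  show ?thesis
    unfolding sigma_finite_measure_def
    by (rule exI[of _ A]) (use A in auto)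
qed

interpretation leb: sigma_finite_measure "lebesgue :: real measure"
  by (rule sigma_finite_completion[OF sigma_finite_lborel])

interpretation leb_pair: pair_sigma_finite "lebesgue :: real measure" "lebesgue :: real measure" ..

lemma fst_leb_meas: "(\<lambda>x::real\<times>real. fst x) \<in> borel_measurable (lebesgue \<Otimes>\<^sub>M lebesgue)"
  by (rule measurable_compose[OF measurable_fst]) (rule measurable_completion, simp)

lemma snd_leb_meas: "(\<lambda>x::real\<times>real. snd x) \<in> borel_measurable (lebesgue \<Otimes>\<^sub>M lebesgue)"
  by (rule measurable_compose[OF measurable_snd]) (rule measurable_completion, simp)

lemma ibp_core:
  fixes F G :: "real \<Rightarrow> real"
  assumes F: "integrable lebesgue F" and G: "integrable lebesgue G"
  shows "(\<integral>s. G s * (\<integral>r. F r * indicator {..s} r \<partial>lebesgue) \<partial>lebesgue)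
       + (\<integral>s. F s * (\<integral>r. G r * indicator {..<s} r \<partial>lebesgue) \<partial>lebesgue)
       = (\<integral>r. F r \<partial>lebesgue) * (\<integral>s. G s \<partial>lebesgue)"
proof -
  let ?M = "lebesgue \<Otimes>\<^sub>M (lebesgue :: real measure)"
  have Fm: "F \<in> borel_measurable lebesgue" and Gm: "G \<in> borel_measurable lebesgue"
    using F G by (auto intro: borel_measurable_integrable)
  have Ff: "(\<lambda>x. F (fst x)) \<in> borel_measurable ?M"
    by (rule measurable_compose[OF measurable_fst Fm])
  have Gs: "(\<lambda>x. G (snd x)) \<in> borel_measurable ?M"
    by (rule measurable_compose[OF measurable_snd Gm])
  have Fs: "(\<lambda>x. F (snd x)) \<in> borel_measurable ?M"
    by (rule measurable_compose[OF measurable_snd Fm])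
  have Gf: "(\<lambda>x. G (fst x)) \<in> borel_measurable ?M"
    by (rule measurable_compose[OF measurable_fst Gm])
  have le_m: "(\<lambda>x. indicator {..snd x} (fst x) :: real) \<in> borel_measurable ?M"
  proof -
    have "{x \<in> space ?M. fst x \<le> snd x} \<in> sets ?M"
      using fst_leb_meas snd_leb_meas by measurable
    then have "{x. fst x \<le> snd x} \<in> sets ?M" by (simp add: space_pair_measure)
    then have "(indicator {x. fst x \<le> snd x} :: _ \<Rightarrow> real) \<in> borel_measurable ?M"
      by (rule borel_measurable_indicator)
    moreover have "(\<lambda>x. indicator {..snd x} (fst x) :: real) = indicator {x. fst x \<le> snd x}"
      by (auto simp: indicator_def fun_eq_iff)
    ultimately show ?thesis by metis
  qed
  have lt_m: "(\<lambda>x. indicator {..<snd x} (fst x) :: real) \<in> borel_measurable ?M"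
  proof -
    have "{x \<in> space ?M. fst x < snd x} \<in> sets ?M"
      using fst_leb_meas snd_leb_meas by measurable
    then have "{x. fst x < snd x} \<in> sets ?M" by (simp add: space_pair_measure)
    then have "(indicator {x. fst x < snd x} :: _ \<Rightarrow> real) \<in> borel_measurable ?M"
      by (rule borel_measurable_indicator)
    moreover have "(\<lambda>x. indicator {..<snd x} (fst x) :: real) = indicator {x. fst x < snd x}"
      by (auto simp: indicator_def fun_eq_iff)
    ultimately show ?thesis by metis
  qed
  have Hm: "(\<lambda>x. F (fst x) * G (snd x)) \<in> borel_measurable ?M"
    using Ff Gs by measurable
  have Hint: "integrable ?M (\<lambda>x. F (fst x) * G (snd x))"
  proof (rule leb_pair.Fubini_integrable[OF Hm])
    have "(\<lambda>x. \<integral>y. norm (F (fst (x, y)) * G (snd (x, y))) \<partial>lebesgue) = (\<lambda>x. \<bar>F x\<bar> * (\<integral>y. \<bar>G y\<bar> \<partial>lebesgue))"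
      by (simp add: abs_mult)
    moreover have "integrable lebesgue (\<lambda>x. \<bar>F x\<bar> * (\<integral>y. \<bar>G y\<bar> \<partial>lebesgue))"
      using F by (intro integrable_mult_left) auto
    ultimately show "integrable lebesgue (\<lambda>x. \<integral>y. norm (F (fst (x, y)) * G (snd (x, y))) \<partial>lebesgue)"
      by simp
    show "AE x in lebesgue. integrable lebesgue (\<lambda>y. F (fst (x, y)) * G (snd (x, y)))"
      using G by simp
  qed
  let ?H1 = "\<lambda>x. F (fst x) * G (snd x) * indicator {..snd x} (fst x)"
  let ?H2 = "\<lambda>x. F (fst x) * G (snd x) * indicator {..<fst x} (snd x)"
  have H1int: "integrable ?M ?H1"
    by (rule Bochner_Integration.integrable_bound[OF Hint]) (use Hm le_m in \<open>auto simp: indicator_def\<close>)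
  have H2int: "integrable ?M ?H2"
  proof (rule Bochner_Integration.integrable_bound[OF Hint])
    have "(\<lambda>x. indicator {..<fst x} (snd x) :: real) \<in> borel_measurable ?M"
    proof -
      have "{x \<in> space ?M. snd x < fst x} \<in> sets ?M"
        using fst_leb_meas snd_leb_meas by measurable
      then have "{x. snd x < fst x} \<in> sets ?M" by (simp add: space_pair_measure)
      then have "(indicator {x. snd x < fst x} :: _ \<Rightarrow> real) \<in> borel_measurable ?M"
        by (rule borel_measurable_indicator)
      moreover have "(\<lambda>x. indicator {..<fst x} (snd x) :: real) = indicator {x. snd x < fst x}"
        by (auto simp: indicator_def fun_eq_iff)
      ultimately show ?thesis by metis
    qed
    then show "?H2 \<in> borel_measurable ?M" using Hm by measurable
  qed (auto simp: indicator_def)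
  have e1: "(\<integral>s. G s * (\<integral>r. F r * indicator {..s} r \<partial>lebesgue) \<partial>lebesgue) = integral\<^sup>L ?M ?H1"
  proof -
    have "integral\<^sup>L ?M ?H1 = (\<integral>s. (\<integral>r. F r * G s * indicator {..s} r \<partial>lebesgue) \<partial>lebesgue)"
      using leb_pair.integral_snd[of "\<lambda>r s. F r * G s * indicator {..s} r"] H1int
      by (simp add: case_prod_beta')
    also have "\<dots> = (\<integral>s. G s * (\<integral>r. F r * indicator {..s} r \<partial>lebesgue) \<partial>lebesgue)"
      by (rule Bochner_Integration.integral_cong) (simp_all add: ac_simps flip: integral_mult_left_zero integral_mult_right_zero)
    finally show ?thesis by simp
  qed
  have e2: "(\<integral>s. F s * (\<integral>r. G r * indicator {..<s} r \<partial>lebesgue) \<partial>lebesgue) = integral\<^sup>L ?M ?H2"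
  proof -
    have "integral\<^sup>L ?M ?H2 = (\<integral>r. (\<integral>s. F r * G s * indicator {..<r} s \<partial>lebesgue) \<partial>lebesgue)"
      using leb_pair.integral_fst[of "\<lambda>r s. F r * G s * indicator {..<r} s"] H2int
      by (simp add: case_prod_beta')
    also have "\<dots> = (\<integral>s. F s * (\<integral>r. G r * indicator {..<s} r \<partial>lebesgue) \<partial>lebesgue)"
      by (rule Bochner_Integration.integral_cong) (simp_all add: ac_simps flip: integral_mult_left_zero integral_mult_right_zero)
    finally show ?thesis by simp
  qed
  have "integral\<^sup>L ?M ?H1 + integral\<^sup>L ?M ?H2 = integral\<^sup>L ?M (\<lambda>x. ?H1 x + ?H2 x)"
    using H1int H2int by simp
  also have "\<dots> = integral\<^sup>L ?M (\<lambda>x. F (fst x) * G (snd x))"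
    by (rule Bochner_Integration.integral_cong) (auto simp: indicator_def)
  also have "\<dots> = (\<integral>r. (\<integral>s. F r * G s \<partial>lebesgue) \<partial>lebesgue)"
    using leb_pair.integral_fst[of "\<lambda>r s. F r * G s"] Hint by (simp add: case_prod_beta')
  also have "\<dots> = (\<integral>r. F r \<partial>lebesgue) * (\<integral>s. G s \<partial>lebesgue)"
    by simp
  finally show ?thesis using e1 e2 by simp
qed

lemma set_integral_Icc_sub:
  fixes f :: "real \<Rightarrow> real"
  assumes f: "f absolutely_integrable_on {0..1}" and s: "s \<in> {0..1}"
  shows "(\<integral>r. (indicator {0..1} r * f r) * indicator {..s} r \<partial>lebesgue) = integral {0..s} f"
    and "(\<integral>r. (indicator {0..1} r * f r) * indicator {..<s} r \<partial>lebesgue) = integral {0..s} f"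
proof -
  have i1: "f absolutely_integrable_on {0..s}"
    by (rule set_integrable_subset[OF f]) (use s in auto)
  have i2: "f absolutely_integrable_on {0..<s}"
    by (rule set_integrable_subset[OF f]) (use s in auto)
  have "(\<integral>r. (indicator {0..1} r * f r) * indicator {..s} r \<partial>lebesgue) = (LINT r:{0..s}|lebesgue. f r)"
    unfolding set_lebesgue_integral_def
    by (rule Bochner_Integration.integral_cong) (use s in \<open>auto simp: indicator_def\<close>)
  also have "\<dots> = integral {0..s} f" by (rule set_lebesgue_integral_eq_integral(2)[OF i1])
  finally show "(\<integral>r. (indicator {0..1} r * f r) * indicator {..s} r \<partial>lebesgue) = integral {0..s} f" .
  have "(\<integral>r. (indicator {0..1} r * f r) * indicator {..<s} r \<partial>lebesgue) = (LINT r:{0..<s}|lebesgue. f r)"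
    unfolding set_lebesgue_integral_def
    by (rule Bochner_Integration.integral_cong) (use s in \<open>auto simp: indicator_def\<close>)
  also have "\<dots> = integral {0..<s} f" by (rule set_lebesgue_integral_eq_integral(2)[OF i2])
  also have "\<dots> = integral {0..s} f"
    by (rule integral_spike_set) (auto intro: negligible_subset[of "{s}"])
  finally show "(\<integral>r. (indicator {0..1} r * f r) * indicator {..<s} r \<partial>lebesgue) = integral {0..s} f" .
qed

lemma outer_integral_eq:
  fixes f g :: "real \<Rightarrow> real"
  assumes f: "f absolutely_integrable_on {0..1}" and g: "g absolutely_integrable_on {0..1}"
    and A: "\<And>s. s \<in> {0..1} \<Longrightarrow> A s = integral {0..s} f"
  shows "(\<integral>s. (indicator {0..1} s * g s) * A s \<partial>lebesgue) = integral {0..1} (\<lambda>s. g s * integral {0..s} f)"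
proof -
  have cont: "continuous_on {0..1} (\<lambda>s. integral {0..s} f)"
    by (rule indefinite_integral_continuous_1) (use f in \<open>simp add: absolutely_integrable_on_def\<close>)
  have pi: "(\<lambda>s. integral {0..s} f * g s) absolutely_integrable_on {0..1}"
  proof (rule absolutely_integrable_bounded_measurable_product_real)
    show "(\<lambda>s. integral {0..s} f) \<in> borel_measurable (lebesgue_on {0..1})"
      by (rule continuous_imp_measurable_on_sets_lebesgue[OF cont]) simp
    show "bounded ((\<lambda>s. integral {0..s} f) ` {0..1})"
      by (rule compact_imp_bounded, rule compact_continuous_image[OF cont]) simp
  qed (use g in auto)
  have "(\<integral>s. (indicator {0..1} s * g s) * A s \<partial>lebesgue) = (LINT s:{0..1}|lebesgue. integral {0..s} f * g s)"
    unfolding set_lebesgue_integral_def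
    by (rule Bochner_Integration.integral_cong) (auto simp: indicator_def A)
  also have "\<dots> = integral {0..1} (\<lambda>s. integral {0..s} f * g s)"
    by (rule set_lebesgue_integral_eq_integral(2)[OF pi])
  finally show ?thesis by (simp add: mult.commute)
qed

lemma ibp_scalar:
  fixes f g :: "real \<Rightarrow> real"
  assumes f: "f absolutely_integrable_on {0..1}" and g: "g absolutely_integrable_on {0..1}"
  shows "integral {0..1} (\<lambda>s. g s * integral {0..s} f) + integral {0..1} (\<lambda>s. f s * integral {0..s} g)
       = integral {0..1} f * integral {0..1} g"
proof -
  define F where "F r = indicator {0..1} r * f r" for r :: real
  define G where "G r = indicator {0..1} r * g r" for r :: real
  have Fi: "integrable lebesgue F" using f unfolding F_def set_integrable_def by simp
  have Gi: "integrable lebesgue G" using g unfolding G_def set_integrable_def by simp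
  have 1: "(\<integral>s. G s * (\<integral>r. F r * indicator {..s} r \<partial>lebesgue) \<partial>lebesgue) = integral {0..1} (\<lambda>s. g s * integral {0..s} f)"
    unfolding G_def by (rule outer_integral_eq[OF f g]) (simp add: F_def set_integral_Icc_sub(1)[OF f])
  have 2: "(\<integral>s. F s * (\<integral>r. G r * indicator {..<s} r \<partial>lebesgue) \<partial>lebesgue) = integral {0..1} (\<lambda>s. f s * integral {0..s} g)"
    unfolding F_def by (rule outer_integral_eq[OF g f]) (simp add: G_def set_integral_Icc_sub(2)[OF g])
  have 3: "(\<integral>r. F r \<partial>lebesgue) = integral {0..1} f"
    using set_lebesgue_integral_eq_integral(2)[OF f] unfolding set_lebesgue_integral_def F_def by simp
  have 4: "(\<integral>r. G r \<partial>lebesgue) = integral {0..1} g"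
    using set_lebesgue_integral_eq_integral(2)[OF g] unfolding set_lebesgue_integral_def G_def by simp
  show ?thesis using ibp_core[OF Fi Gi] 1 2 3 4 by simp
qed

lemma wedge_nth[simp]: "wedge v w $ i $ j = v $ i * w $ j - w $ i * v $ j"
  by (simp add: wedge_def)

lemma bilinear_wedge: "bilinear (wedge :: real ^ 'n \<Rightarrow> real ^ 'n \<Rightarrow> real ^ 'n ^ 'n)"
  unfolding bilinear_def
  by (auto intro!: linearI simp: vec_eq_iff algebra_simps)

lemma bilinear_wedge_swap: "bilinear (\<lambda>x y. wedge y x :: real ^ 'n ^ 'n)"
  unfolding bilinear_def
  by (auto intro!: linearI simp: vec_eq_iff algebra_simps)

lemma wedge_add_left: "wedge (a + b) c = wedge a c + wedge b c"
  by (simp add: vec_eq_iff algebra_simps)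
lemma wedge_add_right: "wedge c (a + b) = wedge c a + wedge c b"
  by (simp add: vec_eq_iff algebra_simps)
lemma wedge_diff_left: "wedge (a - b) c = wedge a c - wedge b c"
  by (simp add: vec_eq_iff algebra_simps)
lemma wedge_diff_right: "wedge c (a - b) = wedge c a - wedge c b"
  by (simp add: vec_eq_iff algebra_simps)
lemma wedge_scale_left: "wedge (r *\<^sub>R a) c = r *\<^sub>R wedge a c"
  by (simp add: vec_eq_iff algebra_simps)
lemma wedge_scale_right: "wedge c (r *\<^sub>R a) = r *\<^sub>R wedge c a"
  by (simp add: vec_eq_iff algebra_simps)
lemma wedge_self[simp]: "wedge a a = 0"
  by (simp add: vec_eq_iff algebra_simps)
lemma wedge_zero[simp]: "wedge 0 a = 0" "wedge a 0 = 0"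
  by (simp_all add: vec_eq_iff)
lemma wedge_swap: "wedge b a = - wedge a b"
  by (simp add: vec_eq_iff algebra_simps)
lemma wedge_uminus: "wedge (- a) b = - wedge a b" "wedge a (- b) = - wedge a b"
  by (simp_all add: vec_eq_iff algebra_simps)

lemma antisym_wedge: "antisym_mat (wedge v w)"
  by (simp add: antisym_mat_def)

lemma antisym_mat_iff: "antisym_mat Y \<longleftrightarrow> (\<forall>i j. Y $ i $ j + Y $ j $ i = 0)"
  unfolding antisym_mat_def by (metis add_eq_0_iff)

lemma subspace_antisym: "subspace {Y :: real^'n^'n. antisym_mat Y}"
  unfolding subspace_def mem_Collect_eq
proof (intro conjI ballI allI)
  show "antisym_mat (0::real^'n^'n)" by (simp add: antisym_mat_iff)
  fix x y :: "real^'n^'n" and c :: real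
  assume x: "x \<in> Collect antisym_mat" and y: "y \<in> Collect antisym_mat"
  show "antisym_mat (x + y)" unfolding antisym_mat_iff
  proof (intro allI)
    fix i j
    have "x $ i $ j + x $ j $ i = 0" "y $ i $ j + y $ j $ i = 0" using x y by (auto simp: antisym_mat_iff)
    then show "(x + y) $ i $ j + (x + y) $ j $ i = 0" by simp
  qed
next
  fix x :: "real^'n^'n" and c :: real
  assume x: "x \<in> Collect antisym_mat"
  show "antisym_mat (c *\<^sub>R x)" unfolding antisym_mat_iff
  proof (intro allI)
    fix i j
    have "x $ i $ j + x $ j $ i = 0" using x by (auto simp: antisym_mat_iff)
    then show "(c *\<^sub>R x) $ i $ j + (c *\<^sub>R x) $ j $ i = 0" by (simp flip: distrib_left)
  qed
qed

lemma wedge_bound: obtains K where "K > 0" "\<And>v w. norm (wedge v w :: real^'n^'n) \<le> K * norm v * norm w"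
  using bilinear_bounded_pos[OF bilinear_wedge] by blast

lemma proj_exists:
  fixes S :: "'a :: euclidean_space set"
  assumes S: "subspace S"
  obtains Pr where "linear Pr" "\<And>x. Pr x \<in> S" "\<And>x w. w \<in> S \<Longrightarrow> (x - Pr x) \<bullet> w = 0"
proof -
  obtain T where T: "0 \<notin> T" "T \<subseteq> span S" "pairwise orthogonal T" "independent T"
    "card T = dim (span S)" "span T = span S"
    using orthogonal_basis_subspace subspace_span by blast
  define Pr where "Pr x = (\<Sum>b\<in>T. (b \<bullet> x / (b \<bullet> b)) *\<^sub>R b)" for x
  have "linear Pr"
    unfolding Pr_def
    by (rule linearI) (simp_all add: sum.distrib inner_add_right add_divide_distrib scaleR_add_left
        scaleR_sum_right inner_scaleR_right)
  moreover have "Pr x \<in> S" for x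
  proof -
    have "Pr x \<in> span S" unfolding Pr_def using T(2)
      by (intro span_sum span_mul) (auto intro: span_base simp: span_mul subsetD)
    then show ?thesis using S by (metis span_eq_iff)
  qed
  moreover have "(x - Pr x) \<bullet> w = 0" if "w \<in> S" for x w
  proof -
    have "w \<in> span T" using T(6) that span_base by blast
    then have "orthogonal (x - Pr x) w"
      unfolding Pr_def
      by (simp add: Gram_Schmidt_step T(3) orthogonal_commute)
    then show ?thesis by (simp add: orthogonal_def)
  qed
  ultimately show ?thesis using that by blast
qed

lemma proj_props:
  fixes S :: "'a :: euclidean_space set"
  assumes S: "subspace S" and lin: "linear Pr" and inS: "\<And>x. Pr x \<in> S"
    and orth: "\<And>x w. w \<in> S \<Longrightarrow> (x - Pr x) \<bullet> w = 0"
  shows "\<And>x. x \<in> S \<Longrightarrow> Pr x = x"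
    and "\<And>x. norm (Pr x) \<le> norm x"
    and "\<And>x. norm (x - Pr x) \<le> norm x"
    and "\<And>x y. y \<in> S \<Longrightarrow> norm (x - Pr x) \<le> norm (x - y)"
proof -
  show pfix: "Pr x = x" if "x \<in> S" for x
  proof -
    have "x - Pr x \<in> S" using that inS S by (simp add: subspace_diff)
    then have "(x - Pr x) \<bullet> (x - Pr x) = 0" using orth by blast
    then show ?thesis by simp
  qed
  have pyth: "norm x ^ 2 = norm (Pr x) ^ 2 + norm (x - Pr x) ^ 2" for x
  proof -
    have "(x - Pr x) \<bullet> Pr x = 0" using orth inS by blast
    then have "norm (Pr x + (x - Pr x)) ^ 2 = norm (Pr x) ^ 2 + norm (x - Pr x) ^ 2"
      by (intro norm_add_Pythagorean) (simp add: orthogonal_def inner_commute)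
    then show ?thesis by simp
  qed
  show "norm (Pr x) \<le> norm x" for x
    using pyth[of x] by (metis le_add_same_cancel1 norm_ge_zero power2_le_imp_le zero_le_power2)
  show nq: "norm (x - Pr x) \<le> norm x" for x
    using pyth[of x] by (metis le_add_same_cancel2 norm_ge_zero power2_le_imp_le zero_le_power2)
  show "norm (x - Pr x) \<le> norm (x - y)" if "y \<in> S" for x y
  proof -
    have "x - Pr x = (x - y) - Pr (x - y)"
      using pfix[OF that] linear_diff[OF lin] by simp
    then show ?thesis using nq[of "x - y"] by metis
  qed
qed

lemma integral_in_subspace:
  fixes f :: "real \<Rightarrow> 'a :: euclidean_space"
  assumes S: "subspace S" and f: "\<And>s. s \<in> D \<Longrightarrow> f s \<in> S"
  shows "integral D f \<in> S"
proof -
  obtain Pr where Pr: "linear Pr" "\<And>x. Pr x \<in> S" "\<And>x w. w \<in> S \<Longrightarrow> (x - Pr x) \<bullet> w = 0"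
    using proj_exists[OF S] by blast
  note pp = proj_props[OF S Pr]
  show ?thesis
  proof (cases "f integrable_on D")
    case True
    have "integral D (\<lambda>s. Pr (f s)) = Pr (integral D f)"
      using integral_linear[OF True linear_conv_bounded_linear[THEN iffD1, OF Pr(1)]]
      by (simp add: o_def)
    moreover have "integral D (\<lambda>s. Pr (f s)) = integral D f"
      by (rule integral_cong) (simp add: pp(1) f)
    ultimately show ?thesis using Pr(2) by metis
  next
    case False
    then show ?thesis using S by (simp add: not_integrable_integral subspace_0)
  qed
qed

lemma int_comp2:
  fixes F :: "real \<Rightarrow> real^'n^'m"
  assumes "F integrable_on D"
  shows "integral D F $ i $ j = integral D (\<lambda>s. F s $ i $ j)"
proof -
  have bl: "bounded_linear (\<lambda>M::real^'n^'m. M $ i $ j)"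
    using bounded_linear_compose[OF bounded_linear_vec_nth bounded_linear_vec_nth] .
  show ?thesis using integral_linear[OF assms bl] by (simp add: o_def)
qed

lemma int_comp1:
  fixes F :: "real \<Rightarrow> real^'n"
  assumes "F integrable_on D"
  shows "integral D F $ i = integral D (\<lambda>s. F s $ i)"
  using integral_component_eq_cart[OF assms] by simp

lemma abs_int_comp:
  fixes F :: "real \<Rightarrow> real^'n"
  assumes "F absolutely_integrable_on D"
  shows "(\<lambda>s. F s $ i) absolutely_integrable_on D"
  using absolutely_integrable_linear[OF assms bounded_linear_vec_nth] by (simp add: o_def)

lemma abs_int_sub01:
  assumes "f absolutely_integrable_on {0..1::real}" "s \<in> {0..1}"
  shows "f absolutely_integrable_on {0..s}"
  by (rule set_integrable_subset[OF assms(1)]) (use assms(2) in auto)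

lemma indef_cont:
  fixes f :: "real \<Rightarrow> 'a::euclidean_space"
  assumes "f absolutely_integrable_on {0..1}"
  shows "continuous_on {0..1} (\<lambda>s. integral {0..s} f)"
  by (rule indefinite_integral_continuous_1) (use assms in \<open>simp add: absolutely_integrable_on_def\<close>)

lemma bilin_prod_abs_int:
  fixes h :: "'a::euclidean_space \<Rightarrow> 'b::euclidean_space \<Rightarrow> 'c::euclidean_space"
  assumes h: "bilinear h" and g: "continuous_on {0..1} g" and f: "f absolutely_integrable_on {0..1::real}"
  shows "(\<lambda>s. h (g s) (f s)) absolutely_integrable_on {0..1}"
proof (rule absolutely_integrable_bounded_measurable_product[OF h])
  show "g \<in> borel_measurable (lebesgue_on {0..1})"
    by (rule continuous_imp_measurable_on_sets_lebesgue[OF g]) simp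
  show "bounded (g ` {0..1})"
    by (rule compact_imp_bounded, rule compact_continuous_image[OF g]) simp
qed (use f in auto)

lemma wedge_int1:
  fixes u :: "real \<Rightarrow> real^'n"
  assumes g: "continuous_on {0..1} g" and f: "f absolutely_integrable_on {0..1::real}"
  shows "(\<lambda>s. wedge (g s) (f s)) absolutely_integrable_on {0..1}"
  by (rule bilin_prod_abs_int[OF bilinear_wedge g f])

lemma wedge_int2:
  assumes g: "continuous_on {0..1} g" and f: "f absolutely_integrable_on {0..1::real}"
  shows "(\<lambda>s. wedge (f s) (g s)) absolutely_integrable_on {0..1}"
  using bilin_prod_abs_int[OF bilinear_wedge_swap g f] by simp

lemma scal_int:
  fixes f g :: "real \<Rightarrow> real"
  assumes f: "f absolutely_integrable_on {0..1}" and g: "g absolutely_integrable_on {0..1}"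
  shows "(\<lambda>s. integral {0..s} f * g s) integrable_on {0..1}"
    "(\<lambda>s. g s * integral {0..s} f) integrable_on {0..1}"
proof -
  have "(\<lambda>s. integral {0..s} f * g s) absolutely_integrable_on {0..1}"
    by (rule bilin_prod_abs_int[OF bilinear_times indef_cont[OF f] g])
  then show "(\<lambda>s. integral {0..s} f * g s) integrable_on {0..1}"
    using set_lebesgue_integral_eq_integral(1) by blast
  then show "(\<lambda>s. g s * integral {0..s} f) integrable_on {0..1}"
    by (simp add: mult.commute)
qed

lemma ibp_wedge:
  fixes \<alpha> \<beta> :: "real \<Rightarrow> real^'n"
  assumes a: "\<alpha> absolutely_integrable_on {0..1}" and b: "\<beta> absolutely_integrable_on {0..1}"
  shows "integral {0..1} (\<lambda>s. wedge (integral {0..s} \<alpha>) (\<beta> s))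
       + integral {0..1} (\<lambda>s. wedge (\<alpha> s) (integral {0..s} \<beta>))
       = wedge (integral {0..1} \<alpha>) (integral {0..1} \<beta>)"
proof -
  have I1: "(\<lambda>s. wedge (integral {0..s} \<alpha>) (\<beta> s)) integrable_on {0..1}"
    using wedge_int1[OF indef_cont[OF a] b] set_lebesgue_integral_eq_integral(1) by blast
  have I2: "(\<lambda>s. wedge (\<alpha> s) (integral {0..s} \<beta>)) integrable_on {0..1}"
    using wedge_int2[OF indef_cont[OF b] a] set_lebesgue_integral_eq_integral(1) by blast
  have aint: "\<alpha> integrable_on {0..s}" if "s \<in> {0..1}" for s
    using abs_int_sub01[OF a that] set_lebesgue_integral_eq_integral(1) by blast
  have bint: "\<beta> integrable_on {0..s}" if "s \<in> {0..1}" for s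
    using abs_int_sub01[OF b that] set_lebesgue_integral_eq_integral(1) by blast
  have ac: "(\<lambda>s. \<alpha> s $ i) absolutely_integrable_on {0..1}" for i using abs_int_comp[OF a] .
  have bc: "(\<lambda>s. \<beta> s $ i) absolutely_integrable_on {0..1}" for i using abs_int_comp[OF b] .
  have Ac: "integral {0..s} \<alpha> $ i = integral {0..s} (\<lambda>r. \<alpha> r $ i)" if "s \<in> {0..1}" for s i
    using int_comp1[OF aint[OF that]] .
  have Bc: "integral {0..s} \<beta> $ i = integral {0..s} (\<lambda>r. \<beta> r $ i)" if "s \<in> {0..1}" for s i
    using int_comp1[OF bint[OF that]] .
  show ?thesis
  proof (subst vec_eq_iff, intro allI, subst vec_eq_iff, intro allI)
    fix i j
    let ?ai = "\<lambda>s. \<alpha> s $ i" and ?aj = "\<lambda>s. \<alpha> s $ j" and ?bi = "\<lambda>s. \<beta> s $ i" and ?bj = "\<lambda>s. \<beta> s $ j"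
    have e1: "integral {0..1} (\<lambda>s. wedge (integral {0..s} \<alpha>) (\<beta> s)) $ i $ j
      = integral {0..1} (\<lambda>s. ?bj s * integral {0..s} ?ai) - integral {0..1} (\<lambda>s. ?bi s * integral {0..s} ?aj)"
    proof -
      have "integral {0..1} (\<lambda>s. wedge (integral {0..s} \<alpha>) (\<beta> s)) $ i $ j
          = integral {0..1} (\<lambda>s. ?bj s * integral {0..s} ?ai - ?bi s * integral {0..s} ?aj)"
        unfolding int_comp2[OF I1] by (rule integral_cong) (simp add: Ac mult.commute)
      also have "\<dots> = integral {0..1} (\<lambda>s. ?bj s * integral {0..s} ?ai) - integral {0..1} (\<lambda>s. ?bi s * integral {0..s} ?aj)"
        by (rule integral_diff) (intro scal_int ac bc)+
      finally show ?thesis .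
    qed
    have e2: "integral {0..1} (\<lambda>s. wedge (\<alpha> s) (integral {0..s} \<beta>)) $ i $ j
      = integral {0..1} (\<lambda>s. ?ai s * integral {0..s} ?bj) - integral {0..1} (\<lambda>s. ?aj s * integral {0..s} ?bi)"
    proof -
      have "integral {0..1} (\<lambda>s. wedge (\<alpha> s) (integral {0..s} \<beta>)) $ i $ j
          = integral {0..1} (\<lambda>s. ?ai s * integral {0..s} ?bj - ?aj s * integral {0..s} ?bi)"
        unfolding int_comp2[OF I2] by (rule integral_cong) (simp add: Bc mult.commute)
      also have "\<dots> = integral {0..1} (\<lambda>s. ?ai s * integral {0..s} ?bj) - integral {0..1} (\<lambda>s. ?aj s * integral {0..s} ?bi)"
        by (rule integral_diff) (intro scal_int ac bc)+
      finally show ?thesis .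
    qed
    have e3: "wedge (integral {0..1} \<alpha>) (integral {0..1} \<beta>) $ i $ j
       = integral {0..1} ?ai * integral {0..1} ?bj - integral {0..1} ?bi * integral {0..1} ?aj"
      using Ac[of 1] Bc[of 1] by simp
    show "(integral {0..1} (\<lambda>s. wedge (integral {0..s} \<alpha>) (\<beta> s)) + integral {0..1} (\<lambda>s. wedge (\<alpha> s) (integral {0..s} \<beta>))) $ i $ j
        = wedge (integral {0..1} \<alpha>) (integral {0..1} \<beta>) $ i $ j"
      using ibp_scalar[OF ac[of i] bc[of j]] ibp_scalar[OF ac[of j] bc[of i]]
      by (simp only: vector_add_component e1 e2 e3) (simp add: algebra_simps)
  qed
qed

lemma quad_lower:
  fixes q :: "'a::euclidean_space \<Rightarrow> real"
  assumes cont: "continuous_on UNIV q" and hom: "\<And>c x. q (c *\<^sub>R x) = c\<^sup>2 * q x"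
    and pos: "\<And>x. x \<in> S \<Longrightarrow> x \<noteq> 0 \<Longrightarrow> q x > 0" and cl: "closed S"
    and sc: "\<And>c x. x \<in> S \<Longrightarrow> c *\<^sub>R x \<in> S"
  obtains c where "c > 0" "\<And>x. x \<in> S \<Longrightarrow> c * (norm x)\<^sup>2 \<le> q x"
proof -
  have q0: "q 0 = 0" using hom[of 0 0] by simp
  let ?K = "S \<inter> sphere 0 1"
  have cK: "compact ?K" using cl by (intro closed_Int_compact) auto
  have scale: "q x \<ge> (norm x)\<^sup>2 * q ((1 / norm x) *\<^sub>R x)" if "x \<noteq> 0" for x
  proof -
    have "x = norm x *\<^sub>R ((1 / norm x) *\<^sub>R x)" using that by simp
    then have "q x = (norm x)\<^sup>2 * q ((1 / norm x) *\<^sub>R x)" by (metis hom)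
    then show ?thesis by simp
  qed
  show ?thesis
  proof (cases "?K = {}")
    case True
    show ?thesis
    proof (rule that[of 1])
      fix x assume x: "x \<in> S"
      show "1 * (norm x)\<^sup>2 \<le> q x"
      proof (cases "x = 0")
        case False
        then have "(1 / norm x) *\<^sub>R x \<in> ?K" using sc[OF x] by simp
        then show ?thesis using True by blast
      qed (simp add: q0)
    qed simp
  next
    case False
    obtain x0 where x0: "x0 \<in> ?K" "\<And>y. y \<in> ?K \<Longrightarrow> q x0 \<le> q y"
      using continuous_attains_inf[OF cK False continuous_on_subset[OF cont]] by blast
    have "x0 \<in> S" "x0 \<noteq> 0" using x0(1) by auto
    then have c0: "q x0 > 0" by (rule pos)
    show ?thesis
    proof (rule that[OF c0])
      fix x assume x: "x \<in> S"
      show "q x0 * (norm x)\<^sup>2 \<le> q x"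
      proof (cases "x = 0")
        case False
        then have "(1 / norm x) *\<^sub>R x \<in> ?K" using sc[OF x] by simp
        then have "q x0 \<le> q ((1 / norm x) *\<^sub>R x)" by (rule x0(2))
        then have "(norm x)\<^sup>2 * q x0 \<le> (norm x)\<^sup>2 * q ((1 / norm x) *\<^sub>R x)"
          by (simp add: mult_left_mono)
        then show ?thesis using scale[OF False] by (simp add: mult.commute)
      qed (simp add: q0)
    qed
  qed
qed

lemma is_normD:
  assumes "is_norm N"
  shows "\<And>x. N x \<ge> 0" "\<And>x. N x = 0 \<longleftrightarrow> x = 0" "\<And>c x. N (c *\<^sub>R x) = \<bar>c\<bar> * N x"
    "\<And>x y. N (x + y) \<le> N x + N y"
  using assms unfolding is_norm_def by blast+

lemma is_norm_continuous:
  fixes N :: "real^'n \<Rightarrow> real"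
  assumes N: "is_norm N"
  shows "continuous_on UNIV N"
proof -
  note ND = is_normD[OF N]
  have conv: "convex_on UNIV N"
    unfolding convex_on_def
  proof (intro conjI ballI allI impI)
    fix x y :: "real^'n" and u v :: real
    assume "0 \<le> u" "0 \<le> v" "u + v = 1"
    have "N (u *\<^sub>R x + v *\<^sub>R y) \<le> N (u *\<^sub>R x) + N (v *\<^sub>R y)" by (rule ND(4))
    also have "\<dots> = u * N x + v * N y" using \<open>0 \<le> u\<close> \<open>0 \<le> v\<close> by (simp add: ND(3))
    finally show "N (u *\<^sub>R x + v *\<^sub>R y) \<le> u * N x + v * N y" .
  qed simp
  show ?thesis by (rule convex_on_continuous[OF open_UNIV conv])
qed

lemma norm_equiv:
  fixes N :: "real^'n \<Rightarrow> real"
  assumes N: "is_norm N"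
  obtains c C where "c > 0" "C > 0" "\<And>x. c * norm x \<le> N x" "\<And>x. N x \<le> C * norm x"
proof -
  note ND = is_normD[OF N]
  have conv: "convex_on UNIV N"
    unfolding convex_on_def
  proof (intro conjI ballI allI impI)
    fix x y :: "real^'n" and u v :: real
    assume "0 \<le> u" "0 \<le> v" "u + v = 1"
    have "N (u *\<^sub>R x + v *\<^sub>R y) \<le> N (u *\<^sub>R x) + N (v *\<^sub>R y)" by (rule ND(4))
    also have "\<dots> = u * N x + v * N y" using \<open>0 \<le> u\<close> \<open>0 \<le> v\<close> by (simp add: ND(3))
    finally show "N (u *\<^sub>R x + v *\<^sub>R y) \<le> u * N x + v * N y" .
  qed simp
  have cont: "continuous_on UNIV N" by (rule convex_on_continuous[OF open_UNIV conv])
  let ?K = "sphere (0::real^'n) 1"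
  have cK: "compact ?K" by simp
  have ne: "?K \<noteq> {}"
  proof -
    obtain i :: 'n where True by blast
    have "axis i 1 \<in> ?K" by simp
    then show ?thesis by blast
  qed
  obtain x0 where x0: "x0 \<in> ?K" "\<And>y. y \<in> ?K \<Longrightarrow> N x0 \<le> N y"
    using continuous_attains_inf[OF cK ne continuous_on_subset[OF cont]] by blast
  obtain x1 where x1: "x1 \<in> ?K" "\<And>y. y \<in> ?K \<Longrightarrow> N y \<le> N x1"
    using continuous_attains_sup[OF cK ne continuous_on_subset[OF cont]] by blast
  have c0: "N x0 > 0" using x0(1) ND(1)[of x0] ND(2)[of x0] by auto
  have C0: "N x1 > 0" using x1(1) ND(1)[of x1] ND(2)[of x1] by auto
  have sc: "N x = norm x * N ((1 / norm x) *\<^sub>R x)" if "x \<noteq> 0" for x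
  proof -
    have "x = norm x *\<^sub>R ((1 / norm x) *\<^sub>R x)" using that by simp
    then show ?thesis by (metis ND(3) abs_norm_cancel)
  qed
  show ?thesis
  proof (rule that[OF c0 C0])
    fix x :: "real^'n"
    show "N x0 * norm x \<le> N x"
    proof (cases "x = 0")
      case False
      have "N x0 \<le> N ((1 / norm x) *\<^sub>R x)" by (rule x0(2)) (use False in simp)
      then have "norm x * N x0 \<le> norm x * N ((1 / norm x) *\<^sub>R x)" by (rule mult_left_mono) simp
      then show ?thesis using sc[OF False] by (simp add: mult.commute)
    qed (use ND(1)[of 0] in simp)
    show "N x \<le> N x1 * norm x"
    proof (cases "x = 0")
      case False
      have "N ((1 / norm x) *\<^sub>R x) \<le> N x1" by (rule x1(2)) (use False in simp)
      then have "norm x * N ((1 / norm x) *\<^sub>R x) \<le> norm x * N x1" by (rule mult_left_mono) simp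
      then show ?thesis using sc[OF False] by (simp add: mult.commute)
    qed (use ND(2)[of 0] in simp)
  qed
qed


lemma N_integrable:
  fixes N :: "real^'n \<Rightarrow> real"
  assumes N: "is_norm N" and u: "u absolutely_integrable_on {0..1::real}"
  shows "(\<lambda>s. N (u s)) absolutely_integrable_on {0..1}"
proof -
  obtain c C where cC: "c > 0" "C > 0" "\<And>x. c * norm x \<le> N x" "\<And>x. N x \<le> C * norm x"
    using norm_equiv[OF N] by blast
  have um: "u \<in> borel_measurable (lebesgue_on {0..1})"
    using u absolutely_integrable_measurable[of "{0..1}" u] by simp
  have Nm: "N \<in> borel_measurable borel"
    by (rule borel_measurable_continuous_onI[OF is_norm_continuous[OF N]])
  show ?thesis
  proof (rule measurable_bounded_by_integrable_imp_absolutely_integrable)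
    show "(\<lambda>s. N (u s)) \<in> borel_measurable (lebesgue_on {0..1})"
      using measurable_compose[OF um Nm] by (simp add: o_def)
    show "(\<lambda>s. C * norm (u s)) integrable_on {0..1}"
      using u cC(2) by (simp add: absolutely_integrable_on_def)
    show "norm (N (u s)) \<le> C * norm (u s)" if "s \<in> {0..1}" for s
      using cC(4)[of "u s"] is_normD(1)[OF N, of "u s"] by simp
  qed simp
qed

definition pc :: "nat \<Rightarrow> (nat \<Rightarrow> real^'n) \<Rightarrow> real \<Rightarrow> real^'n" where
  "pc m c s = real m *\<^sub>R c (nat \<lfloor>real m * s\<rfloor>)"

fun ep :: "(nat \<Rightarrow> real^'n) \<Rightarrow> nat \<Rightarrow> ('n::finite) grp" where
  "ep c 0 = (0, 0)"
| "ep c (Suc k) = gmul (ep c k) (c k, 0)"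

lemma pc_piece:
  assumes m: "m > 0" and s: "real k / real m \<le> s" "s < (real k + 1) / real m"
  shows "pc m c s = real m *\<^sub>R c k"
proof -
  have "real k \<le> real m * s" using s(1) m by (simp add: field_simps)
  moreover have "real m * s < real k + 1" using s(2) m by (simp add: field_simps)
  ultimately have "\<lfloor>real m * s\<rfloor> = int k" by (simp add: floor_eq_iff)
  then show ?thesis unfolding pc_def by simp
qed

lemma pc_int_piece:
  assumes m: "m > 0" and s: "real k / real m \<le> s" "s \<le> (real k + 1) / real m"
  shows "(pc m c has_integral ((s - real k / real m) * real m) *\<^sub>R c k) {real k / real m..s}"
proof (rule has_integral_spike[where S = "{s}" and f = "\<lambda>_. real m *\<^sub>R c k"])
  show "negligible {s}" by simp
  show "pc m c x = real m *\<^sub>R c k" if "x \<in> {real k / real m..s} - {s}" for x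
    using that s by (intro pc_piece[OF m]) auto
  note has_integral_const_real[of "real m *\<^sub>R c k" "real k / real m" s]
  then show "((\<lambda>_. real m *\<^sub>R c k) has_integral ((s - real k / real m) * real m) *\<^sub>R c k) {real k / real m..s}"
    using s(1) by simp
qed

lemma pc_main:
  fixes c :: "nat \<Rightarrow> real^'n"
  assumes m: "m > 0"
  shows "k \<le> m \<Longrightarrow> (pc m c has_integral fst (ep c k)) {0..real k / real m}
      \<and> ((\<lambda>s. wedge (integral {0..s} (pc m c)) (pc m c s)) has_integral (2 *\<^sub>R snd (ep c k))) {0..real k / real m}"
proof (induction k)
  case 0
  then show ?case by (simp add: has_integral_refl(2))
next
  case (Suc k)
  then have IH: "(pc m c has_integral fst (ep c k)) {0..real k / real m}"
      "((\<lambda>s. wedge (integral {0..s} (pc m c)) (pc m c s)) has_integral (2 *\<^sub>R snd (ep c k))) {0..real k / real m}"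
    by auto
  define t0 where "t0 = real k / real m"
  define t1 where "t1 = (real k + 1) / real m"
  have t01: "0 \<le> t0" "t0 \<le> t1" using m by (auto simp: t0_def t1_def divide_right_mono)
  have t1e: "real (Suc k) / real m = t1" by (simp add: t1_def)
  have len: "(t1 - t0) * real m = 1" using m by (simp add: t0_def t1_def field_simps)
  have Xs: "integral {0..s} (pc m c) = fst (ep c k) + ((s - t0) * real m) *\<^sub>R c k" if "t0 \<le> s" "s \<le> t1" for s
  proof -
    have "(pc m c has_integral fst (ep c k) + ((s - t0) * real m) *\<^sub>R c k) {0..s}"
      by (rule has_integral_combine[OF t01(1) that(1)])
        (use IH(1) pc_int_piece[OF m, of k s c] that in \<open>simp_all add: t0_def t1_def\<close>)
    then show ?thesis by (rule integral_unique)
  qed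
  have A: "(pc m c has_integral fst (ep c (Suc k))) {0..real (Suc k) / real m}"
  proof -
    have "(pc m c has_integral fst (ep c k) + ((t1 - t0) * real m) *\<^sub>R c k) {0..t1}"
      by (rule has_integral_combine[OF t01])
        (use IH(1) pc_int_piece[OF m, of k t1 c] t01 in \<open>simp_all add: t0_def t1_def\<close>)
    then show ?thesis using len t1e by (simp add: gmul_def)
  qed
  have piece2: "((\<lambda>s. wedge (integral {0..s} (pc m c)) (pc m c s)) has_integral wedge (fst (ep c k)) (c k)) {t0..t1}"
  proof (rule has_integral_spike[where S = "{t1}" and f = "\<lambda>_. real m *\<^sub>R wedge (fst (ep c k)) (c k)"])
    show "negligible {t1}" by simp
    show "wedge (integral {0..x} (pc m c)) (pc m c x) = real m *\<^sub>R wedge (fst (ep c k)) (c k)"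
      if "x \<in> {t0..t1} - {t1}" for x
    proof -
      have "pc m c x = real m *\<^sub>R c k" using that by (intro pc_piece[OF m]) (auto simp: t0_def t1_def)
      moreover have "integral {0..x} (pc m c) = fst (ep c k) + ((x - t0) * real m) *\<^sub>R c k"
        using that by (intro Xs) auto
      ultimately show ?thesis
        by (simp add: wedge_add_left wedge_scale_left wedge_scale_right)
    qed
    note has_integral_const_real[of "real m *\<^sub>R wedge (fst (ep c k)) (c k)" t0 t1]
    then show "((\<lambda>_. real m *\<^sub>R wedge (fst (ep c k)) (c k)) has_integral wedge (fst (ep c k)) (c k)) {t0..t1}"
      using t01 len by (simp add: scaleR_scaleR)
  qed
  have B: "((\<lambda>s. wedge (integral {0..s} (pc m c)) (pc m c s)) has_integral (2 *\<^sub>R snd (ep c (Suc k)))) {0..real (Suc k) / real m}"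
  proof -
    have "((\<lambda>s. wedge (integral {0..s} (pc m c)) (pc m c s)) has_integral (2 *\<^sub>R snd (ep c k) + wedge (fst (ep c k)) (c k))) {0..t1}"
      by (rule has_integral_combine[OF t01 _ piece2]) (use IH(2) in \<open>simp add: t0_def\<close>)
    then show ?thesis using t1e by (simp add: gmul_def scaleR_add_right)
  qed
  show ?case using A B by blast
qed

lemma hcurve_pc:
  fixes c :: "nat \<Rightarrow> real^'n"
  assumes m: "m > 0"
  shows "hcurve (pc m c) 1 = ep c m" and "pc m c integrable_on {0..1}"
proof -
  have *: "(pc m c has_integral fst (ep c m)) {0..1}"
      "((\<lambda>s. wedge (integral {0..s} (pc m c)) (pc m c s)) has_integral (2 *\<^sub>R snd (ep c m))) {0..1}"
    using pc_main[OF m, of m c] m by auto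
  show "hcurve (pc m c) 1 = ep c m"
    unfolding hcurve_def using integral_unique[OF *(1)] integral_unique[OF *(2)]
    by (simp add: prod_eq_iff)
  show "pc m c integrable_on {0..1}" using *(1) by blast
qed

lemma pc_bound:
  assumes m: "m > 0" and s: "s \<in> {0..1}"
  shows "norm (pc m c s) \<le> real m * (\<Sum>j\<le>m. norm (c j))"
proof -
  have "real m * s \<le> real m" using s by (simp add: mult_left_le)
  then have "nat \<lfloor>real m * s\<rfloor> \<le> m" by (simp add: nat_le_iff floor_le_iff)
  then have "norm (c (nat \<lfloor>real m * s\<rfloor>)) \<le> (\<Sum>j\<le>m. norm (c j))"
    by (intro member_le_sum) auto
  then show ?thesis unfolding pc_def by (simp add: mult_left_mono)
qed

lemma pc_admissible:
  assumes m: "m > 0"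
  shows "admissible (pc m c)"
  unfolding admissible_def
  by (rule absolutely_integrable_integrable_bound[OF pc_bound[OF m] hcurve_pc(2)[OF m]]) auto

definition sel :: "nat \<Rightarrow> real^'n \<Rightarrow> real^'n \<Rightarrow> real^'n" where
  "sel r a b = (if r = 0 then a else if r = 1 then b else if r = 2 then - a else - b)"

definition chow_c :: "(nat \<Rightarrow> 'n) \<Rightarrow> real^'n \<Rightarrow> real^'n^'n \<Rightarrow> nat \<Rightarrow> real^('n::finite)" where
  "chow_c h x Y j = (if j < 4 * CARD('n) then sel (j mod 4) (axis (h (j div 4)) 1) ((1/2) *\<^sub>R Y $ h (j div 4)) else x)"

lemma ep_chow4:
  fixes Y :: "real^'n^'n" and h :: "nat \<Rightarrow> 'n"
  shows "k \<le> CARD('n) \<Longrightarrow> ep (chow_c h x Y) (4 * k) = (0, \<Sum>i<k. wedge (axis (h i) 1) ((1/2) *\<^sub>R Y $ h i))"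
proof (induction k)
  case 0
  then show ?case by simp
next
  case (Suc k)
  let ?c = "chow_c h x Y"
  let ?e = "axis (h k) 1 :: real^'n" and ?w = "(1/2) *\<^sub>R Y $ h k"
  have k: "k < CARD('n)" using Suc by simp
  have d: "Suc (4 * k) div 4 = k" "Suc (Suc (4 * k)) div 4 = k" "Suc (Suc (Suc (4 * k))) div 4 = k"
     "Suc (4 * k) mod 4 = 1" "Suc (Suc (4 * k)) mod 4 = 2" "Suc (Suc (Suc (4 * k))) mod 4 = 3"
    by presburger+
  have c0: "?c (4 * k) = ?e" using k by (simp add: chow_c_def sel_def)
  have c1: "?c (Suc (4 * k)) = ?w" using k by (simp add: chow_c_def sel_def d)
  have c2: "?c (Suc (Suc (4 * k))) = - ?e" using k by (simp add: chow_c_def sel_def d)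
  have c3: "?c (Suc (Suc (Suc (4 * k)))) = - ?w" using k by (simp add: chow_c_def sel_def d)
  have e: "4 * Suc k = Suc (Suc (Suc (Suc (4 * k))))" by simp
  have IH: "ep ?c (4 * k) = (0, \<Sum>i<k. wedge (axis (h i) 1) ((1/2) *\<^sub>R Y $ h i))"
    using Suc by simp
  show ?case
    unfolding e ep.simps c0 c1 c2 c3 IH
    by (simp add: gmul_def wedge_add_left wedge_add_right wedge_uminus wedge_scale_left
        wedge_scale_right algebra_simps wedge_swap[of "Y $ h k" "axis (h k) 1"])
qed

lemma sum_axis_left: "(\<Sum>i\<in>UNIV. (axis i 1 :: real^'n) $ k * f i) = f k"
proof -
  have "(\<Sum>i\<in>UNIV. (axis i 1 :: real^'n) $ k * f i) = (\<Sum>i\<in>UNIV. if i = k then f i else 0)"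
    by (rule sum.cong) (auto simp: axis_def)
  then show ?thesis by simp
qed

lemma sum_axis_right: "(\<Sum>i\<in>UNIV. f i * (axis i 1 :: real^'n) $ k) = f k"
  using sum_axis_left[of k f] by (simp add: mult.commute)

lemma antisym_recon:
  fixes Y :: "real^'n^'n"
  assumes "antisym_mat Y"
  shows "(\<Sum>i\<in>UNIV. wedge (axis i 1) ((1/2) *\<^sub>R Y $ i)) = Y"
proof -
  have "(\<Sum>i\<in>UNIV. wedge (axis i 1) ((1/2) *\<^sub>R Y $ i)) $ k $ l = Y $ k $ l" for k l
  proof -
    have "(\<Sum>i\<in>UNIV. wedge (axis i 1) ((1/2) *\<^sub>R Y $ i)) $ k $ l
        = (\<Sum>i\<in>UNIV. axis i 1 $ k * ((1/2) * Y $ i $ l)) - (\<Sum>i\<in>UNIV. ((1/2) * Y $ i $ k) * axis i 1 $ l)"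
      by (simp add: sum_subtractf)
    also have "\<dots> = (1/2) * Y $ k $ l - (1/2) * Y $ l $ k"
      by (simp only: sum_axis_left sum_axis_right)
    also have "\<dots> = Y $ k $ l"
    proof -
      have "Y $ k $ l + Y $ l $ k = 0" using assms unfolding antisym_mat_iff by blast
      then show ?thesis by linarith
    qed
    finally show ?thesis .
  qed
  then show ?thesis by (simp add: vec_eq_iff)
qed

lemma ep_chow:
  fixes Y :: "real^'n^'n"
  assumes h: "bij_betw h {0..<CARD('n)} (UNIV :: 'n set)" and Y: "antisym_mat Y"
  shows "ep (chow_c h x Y) (4 * CARD('n) + 1) = (x, Y)"
proof -
  have "ep (chow_c h x Y) (4 * CARD('n)) = (0, \<Sum>i<CARD('n). wedge (axis (h i) 1) ((1/2) *\<^sub>R Y $ h i))"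
    by (rule ep_chow4) simp
  also have "(\<Sum>i<CARD('n). wedge (axis (h i) 1) ((1/2) *\<^sub>R Y $ h i)) = (\<Sum>i\<in>UNIV. wedge (axis i 1) ((1/2) *\<^sub>R Y $ i))"
    using sum.reindex_bij_betw[OF h, of "\<lambda>i. wedge (axis i 1) ((1/2) *\<^sub>R Y $ i)"]
    by (simp add: lessThan_atLeast0)
  also have "\<dots> = Y" by (rule antisym_recon[OF Y])
  finally have "ep (chow_c h x Y) (4 * CARD('n)) = (0, Y)" .
  moreover have "4 * CARD('n) + 1 = Suc (4 * CARD('n))" by simp
  ultimately show ?thesis by (simp add: gmul_def chow_c_def)
qed

lemma chow_c_bound: "norm (chow_c h x Y j) \<le> 1 + norm x + norm Y"
proof -
  have w: "norm ((1/2) *\<^sub>R Y $ i) \<le> norm Y" for i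
  proof -
    have "norm ((1/2) *\<^sub>R Y $ i) = norm (Y $ i) / 2" by simp
    moreover have "norm (Y $ i) \<le> norm Y" by (rule Finite_Cartesian_Product.norm_nth_le)
    moreover have "0 \<le> norm Y" by simp
    ultimately show ?thesis by linarith
  qed
  have a: "norm (axis i 1 :: real^'n) = 1" for i by simp
  show ?thesis
    unfolding chow_c_def sel_def
    using w a by (auto simp: norm_minus_commute) (smt (verit) norm_ge_zero)+
qed

lemma chow_reach:
  fixes N :: "real^'n \<Rightarrow> real" and Y :: "real^'n^'n"
  assumes N: "is_norm N" and CN: "\<And>z. N z \<le> C * norm z" and C: "C > 0" and Y: "antisym_mat Y"
  shows "\<exists>u. admissible u \<and> hcurve u 1 = (x, Y)
    \<and> sf_length N u \<le> C * real (4 * CARD('n) + 1) * (real (4 * CARD('n) + 2) * (1 + norm x + norm Y))"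
proof -
  obtain h where h: "bij_betw h {0..<card (UNIV :: 'n set)} (UNIV :: 'n set)"
    using ex_bij_betw_nat_finite[of "UNIV :: 'n set"] by auto
  define m where "m = 4 * CARD('n) + 1"
  have m: "m > 0" by (simp add: m_def)
  let ?c = "chow_c h x Y"
  let ?u = "pc m ?c"
  let ?B = "\<Sum>j\<le>m. norm (?c j)"
  have adm: "admissible ?u" by (rule pc_admissible[OF m])
  have hc: "hcurve ?u 1 = (x, Y)"
    using hcurve_pc(1)[OF m, of ?c] ep_chow[OF h Y, of x] by (simp add: m_def)
  have B: "?B \<le> real (m + 1) * (1 + norm x + norm Y)"
  proof -
    have "?B \<le> of_nat (card {..m}) * (1 + norm x + norm Y)"
      by (rule sum_bounded_above) (rule chow_c_bound)
    then show ?thesis by simp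
  qed
  have Nint: "(\<lambda>s. N (?u s)) integrable_on {0..1}"
    using N_integrable[OF N adm[unfolded admissible_def]] set_lebesgue_integral_eq_integral(1) by blast
  have "sf_length N ?u \<le> integral {0..1} (\<lambda>s::real. C * (real m * ?B))"
    unfolding sf_length_def
  proof (rule integral_le[OF Nint])
    show "(\<lambda>s::real. C * (real m * ?B)) integrable_on {0..1}" by (rule integrable_const_ivl)
    show "N (?u s) \<le> C * (real m * ?B)" if "s \<in> {0..1}" for s
      using CN[of "?u s"] pc_bound[OF m that, of ?c] C by (smt (verit) mult_left_mono)
  qed
  also have "\<dots> = C * (real m * ?B)" by simp
  also have "\<dots> \<le> C * (real m * (real (m + 1) * (1 + norm x + norm Y)))"
    using B C by (intro mult_left_mono) auto
  finally show ?thesis using adm hc by (auto simp: m_def ac_simps)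
qed

lemma gmul_0: "gmul 0 p = p"
  by (simp add: gmul_def)

lemma sf_nonneg:
  assumes N: "is_norm N"
  shows "sf_length N u \<ge> 0"
proof (cases "(\<lambda>t. N (u t)) integrable_on {0..1}")
  case True
  then show ?thesis unfolding sf_length_def
    by (rule integral_nonneg) (use is_normD(1)[OF N] in auto)
next
  case False
  then show ?thesis unfolding sf_length_def by (simp add: not_integrable_integral)
qed

lemma antisym_integral:
  fixes f :: "real \<Rightarrow> real^'n^'n"
  assumes "\<And>s. s \<in> D \<Longrightarrow> antisym_mat (f s)"
  shows "antisym_mat (integral D f)"
  using integral_in_subspace[OF subspace_antisym, of D f] assms by simp

lemma antisym_scale: "antisym_mat Y \<Longrightarrow> antisym_mat (c *\<^sub>R Y)"
  using subspace_antisym unfolding subspace_def by auto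

lemma antisym_diff: "antisym_mat Y \<Longrightarrow> antisym_mat Z \<Longrightarrow> antisym_mat (Y - Z)"
  using subspace_diff[OF subspace_antisym] by auto

lemma hcurve_antisym: "antisym_mat (snd (hcurve u t))"
  unfolding hcurve_def by (simp add: antisym_scale antisym_integral antisym_wedge)

lemma carrierG_iff: "p \<in> carrierG \<longleftrightarrow> antisym_mat (snd p)"
  by (simp add: carrierG_def)

lemma closed_carrierG: "closed (carrierG :: ('n::finite) grp set)"
proof -
  have "carrierG = {p :: 'n grp. \<forall>i. \<forall>j. snd p $ i $ j = - (snd p $ j $ i)}"
    by (auto simp: carrierG_def antisym_mat_def)
  also have "closed \<dots>"
    by (intro closed_Collect_all closed_Collect_eq continuous_intros)
  finally show ?thesis .
qed

lemma span_wedges_antisym: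
  "span {wedge v w | v w. v \<in> P \<and> w \<in> P} \<subseteq> {Y :: real^'n^'n. antisym_mat Y}"
  by (rule span_minimal) (auto simp: antisym_wedge subspace_antisym)

lemma layer_sub_carrier:
  assumes "q \<in> layer_sub P" shows "q \<in> carrierG"
proof -
  obtain x Y where q: "q = (x, Y)" "Y \<in> span {wedge v w | v w. v \<in> P \<and> w \<in> P}"
    using assms unfolding layer_sub_def by blast
  then have "antisym_mat Y" using span_wedges_antisym[of P] by blast
  then show ?thesis using q by (simp add: carrierG_def)
qed

lemma adequate_bilinear:
  assumes "adequate_ip ip"
  shows "bilinear ip"
proof -
  have l1: "linear (\<lambda>p. ip p q)" for q using assms unfolding adequate_ip_def by blast
  have sym: "ip p q = ip q p" for p q using assms unfolding adequate_ip_def by blast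
  have "linear (ip p)" for p
  proof -
    have "ip p = (\<lambda>q. ip q p)" using sym by (simp add: fun_eq_iff)
    then show ?thesis using l1 by simp
  qed
  then show ?thesis unfolding bilinear_def using l1 by simp
qed

lemma ip_lower:
  fixes ip :: "('n::finite) grp \<Rightarrow> 'n grp \<Rightarrow> real"
  assumes A: "adequate_ip ip"
  obtains c where "c > 0" "\<And>p. p \<in> carrierG \<Longrightarrow> c * (norm p)\<^sup>2 \<le> ip p p"
proof -
  have bl: "bilinear ip" by (rule adequate_bilinear[OF A])
  have pos: "\<And>p. p \<in> carrierG \<Longrightarrow> p \<noteq> 0 \<Longrightarrow> ip p p > 0" using A unfolding adequate_ip_def by blast
  have l1: "linear (\<lambda>p. ip p q)" for q using A unfolding adequate_ip_def by blast
  have sym: "ip p q = ip q p" for p q using A unfolding adequate_ip_def by blast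
  have sl: "ip (c *\<^sub>R p) q = c * ip p q" for c p q using linear_scale[OF l1[of q], of c p] by simp
  have sr: "ip p (c *\<^sub>R q) = c * ip p q" for c p q using sl[of c q p] sym by metis
  have cont: "continuous_on UNIV (\<lambda>p. ip p p)"
    by (rule bilinear_continuous_on_compose[OF continuous_on_id continuous_on_id bl])
  have hom: "ip (c *\<^sub>R p) (c *\<^sub>R p) = c\<^sup>2 * ip p p" for c p
  proof -
    have "ip (c *\<^sub>R p) (c *\<^sub>R p) = c * (c * ip p p)" by (simp add: sl sr)
    then show ?thesis by (simp add: power2_eq_square)
  qed
  have sc: "c *\<^sub>R p \<in> carrierG" if "p \<in> carrierG" for c p
    using that by (simp add: carrierG_iff antisym_scale)
  show ?thesis
    using quad_lower[of "\<lambda>p. ip p p", OF cont hom pos closed_carrierG sc] that by blast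
qed

lemma dcc_le:
  assumes N: "is_norm N" and v: "admissible v" "hcurve v 1 = h"
  shows "dcc N 0 h \<le> sf_length N v"
  unfolding dcc_def
proof (rule cInf_lower)
  show "sf_length N v \<in> {sf_length N u |u. admissible u \<and> gmul 0 (hcurve u 1) = h}"
    using v by (auto simp: gmul_0)
  show "bdd_below {sf_length N u |u. admissible u \<and> gmul 0 (hcurve u 1) = h}"
    by (rule bdd_belowI[of _ 0]) (auto simp: sf_nonneg[OF N])
qed

lemma chow_bound:
  fixes N :: "real^'n \<Rightarrow> real" and ip :: "('n::finite) grp \<Rightarrow> 'n grp \<Rightarrow> real"
  assumes N: "is_norm N" and A: "adequate_ip ip"
  obtains D where "\<And>h. h \<in> carrierG \<Longrightarrow> ip h h = 1 \<Longrightarrow> dcc N 0 h \<le> D"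
proof -
  obtain c C where cC: "c > 0" "C > 0" "\<And>x. c * norm x \<le> N x" "\<And>x. N x \<le> C * norm x"
    using norm_equiv[OF N] by blast
  obtain cG where cG: "cG > 0" "\<And>p. p \<in> carrierG \<Longrightarrow> cG * (norm p)\<^sup>2 \<le> ip p p"
    using ip_lower[OF A] by blast
  define R where "R = 1 + 1 / cG"
  define D where "D = C * real (4 * CARD('n) + 1) * (real (4 * CARD('n) + 2) * (1 + R + R))"
  have "dcc N 0 h \<le> D" if h: "h \<in> carrierG" "ip h h = 1" for h
  proof -
    obtain x Y where xY: "h = (x, Y)" by (cases h)
    have Y: "antisym_mat Y" using h(1) xY by (simp add: carrierG_iff)
    have nh: "norm h \<le> R"
    proof -
      have "cG * (norm h)\<^sup>2 \<le> 1" using cG(2)[OF h(1)] h(2) by simp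
      then have h2: "(norm h)\<^sup>2 \<le> 1 / cG" using cG(1) by (simp add: field_simps)
      show ?thesis
      proof (cases "norm h \<le> 1")
        case True then show ?thesis using cG(1) by (simp add: R_def add_increasing2)
      next
        case False
        then have "1 * norm h \<le> norm h * norm h" by (intro mult_right_mono) auto
        then have "norm h \<le> (norm h)\<^sup>2" by (simp add: power2_eq_square)
        then show ?thesis using h2 by (simp add: R_def)
      qed
    qed
    have nx: "norm x \<le> R" using norm_fst_le[of x Y] nh xY by simp
    have nY: "norm Y \<le> R" using norm_snd_le[of Y x] nh xY by simp
    obtain u where u: "admissible u" "hcurve u 1 = (x, Y)"
      "sf_length N u \<le> C * real (4 * CARD('n) + 1) * (real (4 * CARD('n) + 2) * (1 + norm x + norm Y))"
      using chow_reach[OF N cC(4) cC(2) Y, of x] by blast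
    have "dcc N 0 h \<le> sf_length N u" using dcc_le[OF N u(1)] u(2) xY by simp
    also have "\<dots> \<le> D"
      unfolding D_def using u(3) nx nY cC(2)
      by (smt (verit, best) mult_left_mono of_nat_0_le_iff zero_le_mult_iff)
    finally show ?thesis .
  qed
  then show ?thesis using that by blast
qed

lemma main_estimate:
  fixes u :: "real \<Rightarrow> real^'n" and Pr :: "real^'n \<Rightarrow> real^'n"
  assumes u: "u absolutely_integrable_on {0..1}" and P: "subspace P"
    and Pr: "linear Pr" "\<And>x. Pr x \<in> P" "\<And>x w. w \<in> P \<Longrightarrow> (x - Pr x) \<bullet> w = 0"
    and del: "\<And>s. s \<in> {0..1} \<Longrightarrow> norm (integral {0..s} u - Pr (integral {0..s} u)) \<le> \<delta>"
    and Kw: "\<And>v w. norm (wedge v w :: real^'n^'n) \<le> Kw * norm v * norm w" "Kw > 0"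
  shows "norm (integral {0..1} (\<lambda>s. wedge (integral {0..s} u) (u s))
            - integral {0..1} (\<lambda>s. wedge (Pr (integral {0..s} u)) (Pr (u s))))
         \<le> 3 * Kw * \<delta> * integral {0..1} (\<lambda>s. norm (u s))"
    and "integral {0..1} (\<lambda>s. wedge (Pr (integral {0..s} u)) (Pr (u s))) \<in> span {wedge v w | v w. v \<in> P \<and> w \<in> P}"
proof -
  note pp = proj_props[OF P Pr]
  define X where "X s = integral {0..s} u" for s
  define U where "U = integral {0..1} (\<lambda>s. norm (u s))"
  have d0: "0 \<le> \<delta>" using del[of 0] norm_ge_zero by (smt (verit) atLeastAtMost_iff)
  have blP: "bounded_linear Pr" using Pr(1) linear_conv_bounded_linear by blast
  have blQ: "bounded_linear (\<lambda>x. x - Pr x)" by (rule bounded_linear_sub[OF bounded_linear_ident blP])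
  have al: "(\<lambda>s. Pr (u s)) absolutely_integrable_on {0..1}"
    using absolutely_integrable_linear[OF u blP] by (simp add: o_def)
  have be: "(\<lambda>s. u s - Pr (u s)) absolutely_integrable_on {0..1}"
    using absolutely_integrable_linear[OF u blQ] by (simp add: o_def)
  have uint: "u integrable_on {0..s}" if "s \<in> {0..1}" for s
    using abs_int_sub01[OF u that] set_lebesgue_integral_eq_integral(1) by blast
  have uint1: "u integrable_on {0..1}" using uint[of 1] by simp
  have nuint: "(\<lambda>s. norm (u s)) integrable_on {0..1}" using u by (simp add: absolutely_integrable_on_def)
  have aX: "integral {0..s} (\<lambda>r. Pr (u r)) = Pr (X s)" if "s \<in> {0..1}" for s
    using integral_linear[OF uint[OF that] blP] by (simp add: o_def X_def)
  have bX: "integral {0..s} (\<lambda>r. u r - Pr (u r)) = X s - Pr (X s)" if "s \<in> {0..1}" for s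
    using integral_linear[OF uint[OF that] blQ] by (simp add: o_def X_def)
  have Xc: "continuous_on {0..1} X" unfolding X_def by (rule indef_cont[OF u])
  have ac: "continuous_on {0..1} (\<lambda>s. Pr (X s))"
    using continuous_on_compose[OF Xc linear_continuous_on[OF blP]] by (simp add: o_def)
  have bc: "continuous_on {0..1} (\<lambda>s. X s - Pr (X s))"
    using continuous_on_compose[OF Xc linear_continuous_on[OF blQ]] by (simp add: o_def)
  have ii: "f absolutely_integrable_on {0..1} \<Longrightarrow> f integrable_on {0..1}" for f :: "real \<Rightarrow> real^'n^'n"
    using set_lebesgue_integral_eq_integral(1) by blast
  have i1: "(\<lambda>s. wedge (Pr (X s)) (Pr (u s))) integrable_on {0..1}" by (rule ii, rule wedge_int1[OF ac al])
  have i2: "(\<lambda>s. wedge (Pr (X s)) (u s - Pr (u s))) integrable_on {0..1}" by (rule ii, rule wedge_int1[OF ac be])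
  have i3: "(\<lambda>s. wedge (X s - Pr (X s)) (u s)) integrable_on {0..1}" by (rule ii, rule wedge_int1[OF bc u])
  have i4: "(\<lambda>s. wedge (Pr (u s)) (X s - Pr (X s))) integrable_on {0..1}" by (rule ii, rule wedge_int2[OF bc al])
  have ibp: "integral {0..1} (\<lambda>s. wedge (Pr (X s)) (u s - Pr (u s)))
      + integral {0..1} (\<lambda>s. wedge (Pr (u s)) (X s - Pr (X s)))
      = wedge (Pr (X 1)) (X 1 - Pr (X 1))"
  proof -
    have "integral {0..1} (\<lambda>s. wedge (Pr (X s)) (u s - Pr (u s)))
        = integral {0..1} (\<lambda>s. wedge (integral {0..s} (\<lambda>r. Pr (u r))) (u s - Pr (u s)))"
      by (rule integral_cong) (simp add: aX)
    moreover have "integral {0..1} (\<lambda>s. wedge (Pr (u s)) (X s - Pr (X s)))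
        = integral {0..1} (\<lambda>s. wedge (Pr (u s)) (integral {0..s} (\<lambda>r. u r - Pr (u r))))"
      by (rule integral_cong) (simp add: bX)
    moreover have "wedge (Pr (X 1)) (X 1 - Pr (X 1))
        = wedge (integral {0..1} (\<lambda>r. Pr (u r))) (integral {0..1} (\<lambda>r. u r - Pr (u r)))"
      by (simp add: aX bX)
    ultimately show ?thesis using ibp_wedge[OF al be] by simp
  qed
  have decomp: "integral {0..1} (\<lambda>s. wedge (X s) (u s))
      = integral {0..1} (\<lambda>s. wedge (Pr (X s)) (Pr (u s)))
      + integral {0..1} (\<lambda>s. wedge (Pr (X s)) (u s - Pr (u s)))
      + integral {0..1} (\<lambda>s. wedge (X s - Pr (X s)) (u s))"
  proof -
    have "integral {0..1} (\<lambda>s. wedge (X s) (u s))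
        = integral {0..1} (\<lambda>s. (wedge (Pr (X s)) (Pr (u s)) + wedge (Pr (X s)) (u s - Pr (u s)))
             + wedge (X s - Pr (X s)) (u s))"
      by (rule integral_cong) (simp add: wedge_diff_left wedge_diff_right)
    also have "\<dots> = integral {0..1} (\<lambda>s. wedge (Pr (X s)) (Pr (u s)) + wedge (Pr (X s)) (u s - Pr (u s)))
        + integral {0..1} (\<lambda>s. wedge (X s - Pr (X s)) (u s))"
      by (rule integral_add[OF integrable_add[OF i1 i2] i3])
    also have "\<dots> = integral {0..1} (\<lambda>s. wedge (Pr (X s)) (Pr (u s)))
      + integral {0..1} (\<lambda>s. wedge (Pr (X s)) (u s - Pr (u s)))
      + integral {0..1} (\<lambda>s. wedge (X s - Pr (X s)) (u s))"
      by (simp add: integral_add[OF i1 i2])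
    finally show ?thesis .
  qed
  have bnd: "norm (X s - Pr (X s)) \<le> \<delta>" if "s \<in> {0..1}" for s
    using del[OF that] by (simp add: X_def)
  have X1: "norm (X 1) \<le> U"
    unfolding X_def U_def by (rule integral_norm_bound_integral[OF uint1 nuint]) simp
  have U0: "0 \<le> U" using X1 norm_ge_zero[of "X 1"] by linarith
  have n1: "norm (wedge (Pr (X 1)) (X 1 - Pr (X 1))) \<le> Kw * \<delta> * U"
  proof -
    have "norm (wedge (Pr (X 1)) (X 1 - Pr (X 1))) \<le> Kw * norm (Pr (X 1)) * norm (X 1 - Pr (X 1))"
      by (rule Kw(1))
    also have "\<dots> \<le> Kw * U * \<delta>"
      using pp(2)[of "X 1"] X1 bnd[of 1] Kw(2) d0 U0
      by (intro mult_mono mult_left_mono) auto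
    finally show ?thesis by (simp add: ac_simps)
  qed
  have n2: "norm (integral {0..1} (\<lambda>s. wedge (Pr (u s)) (X s - Pr (X s)))) \<le> Kw * \<delta> * U"
  proof -
    have "norm (integral {0..1} (\<lambda>s. wedge (Pr (u s)) (X s - Pr (X s)))) \<le> integral {0..1} (\<lambda>s. Kw * \<delta> * norm (u s))"
    proof (rule integral_norm_bound_integral[OF i4])
      show "(\<lambda>s. Kw * \<delta> * norm (u s)) integrable_on {0..1}" using integrable_cmul[OF nuint, of "Kw * \<delta>"] by simp
      show "norm (wedge (Pr (u s)) (X s - Pr (X s))) \<le> Kw * \<delta> * norm (u s)" if "s \<in> {0..1}" for s
      proof -
        have "norm (wedge (Pr (u s)) (X s - Pr (X s))) \<le> Kw * norm (Pr (u s)) * norm (X s - Pr (X s))"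
          by (rule Kw(1))
        also have "\<dots> \<le> Kw * norm (u s) * \<delta>"
          using pp(2)[of "u s"] bnd[OF that] Kw(2) d0
          by (intro mult_mono mult_left_mono) auto
        finally show ?thesis by (simp add: ac_simps)
      qed
    qed
    also have "\<dots> = Kw * \<delta> * U" by (simp add: U_def)
    finally show ?thesis .
  qed
  have n3: "norm (integral {0..1} (\<lambda>s. wedge (X s - Pr (X s)) (u s))) \<le> Kw * \<delta> * U"
  proof -
    have "norm (integral {0..1} (\<lambda>s. wedge (X s - Pr (X s)) (u s))) \<le> integral {0..1} (\<lambda>s. Kw * \<delta> * norm (u s))"
    proof (rule integral_norm_bound_integral[OF i3])
      show "(\<lambda>s. Kw * \<delta> * norm (u s)) integrable_on {0..1}" using integrable_cmul[OF nuint, of "Kw * \<delta>"] by simp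
      show "norm (wedge (X s - Pr (X s)) (u s)) \<le> Kw * \<delta> * norm (u s)" if "s \<in> {0..1}" for s
      proof -
        have "norm (wedge (X s - Pr (X s)) (u s)) \<le> Kw * norm (X s - Pr (X s)) * norm (u s)"
          by (rule Kw(1))
        also have "\<dots> \<le> Kw * \<delta> * norm (u s)"
          using bnd[OF that] Kw(2) d0
          by (intro mult_mono mult_left_mono) auto
        finally show ?thesis .
      qed
    qed
    also have "\<dots> = Kw * \<delta> * U" by (simp add: U_def)
    finally show ?thesis .
  qed
  have eq: "integral {0..1} (\<lambda>s. wedge (X s) (u s)) - integral {0..1} (\<lambda>s. wedge (Pr (X s)) (Pr (u s)))
      = wedge (Pr (X 1)) (X 1 - Pr (X 1)) - integral {0..1} (\<lambda>s. wedge (Pr (u s)) (X s - Pr (X s)))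
        + integral {0..1} (\<lambda>s. wedge (X s - Pr (X s)) (u s))"
    using decomp ibp by (simp add: algebra_simps)
  have "norm (integral {0..1} (\<lambda>s. wedge (X s) (u s)) - integral {0..1} (\<lambda>s. wedge (Pr (X s)) (Pr (u s))))
      \<le> Kw * \<delta> * U + Kw * \<delta> * U + Kw * \<delta> * U"
    unfolding eq using n1 n2 n3 norm_triangle_ineq norm_triangle_ineq4
    by (smt (verit, ccfv_SIG))
  then show "norm (integral {0..1} (\<lambda>s. wedge (integral {0..s} u) (u s))
            - integral {0..1} (\<lambda>s. wedge (Pr (integral {0..s} u)) (Pr (u s))))
         \<le> 3 * Kw * \<delta> * integral {0..1} (\<lambda>s. norm (u s))"
    by (simp add: X_def U_def)
  show "integral {0..1} (\<lambda>s. wedge (Pr (integral {0..s} u)) (Pr (u s))) \<in> span {wedge v w | v w. v \<in> P \<and> w \<in> P}"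
    by (rule integral_in_subspace[OF subspace_span]) (use Pr(2) in \<open>auto intro!: span_base\<close>)
qed

theorem mainTheorem4:
  fixes N :: "real ^ 'n \<Rightarrow> real"
    and ip :: "'n grp \<Rightarrow> 'n grp \<Rightarrow> real"
  assumes "CARD('n) \<ge> 2"
    and "is_norm N"
    and "adequate_ip ip"
  shows "\<exists>K. \<forall>\<epsilon>>0. \<forall>\<gamma> P.
           is_geodesic N 0 (\<gamma> 1) \<gamma> \<and> d_eu ip (\<gamma> 1) 0 = 1 \<and> subspace P
           \<and> (\<forall>t\<in>{0..1}. hdist_eu ip (proj (\<gamma> t)) P < \<epsilon>)
           \<longrightarrow> setdist_eu ip (\<gamma> 1) (layer_sub P) < K * \<epsilon>"
proof -
  note N = assms(2) and A = assms(3)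
  obtain cN CN where cN: "cN > 0" "CN > 0" "\<And>x. cN * norm x \<le> N x" "\<And>x. N x \<le> CN * norm x"
    using norm_equiv[OF N] by blast
  obtain cG where cG: "cG > 0" "\<And>p. p \<in> carrierG \<Longrightarrow> cG * (norm p)\<^sup>2 \<le> ip p p"
    using ip_lower[OF A] by blast
  obtain CI where CI: "CI > 0" "\<And>x y. norm (ip x y) \<le> CI * norm x * norm y"
    using bilinear_bounded_pos[OF adequate_bilinear[OF A]] by blast
  obtain Kw where Kw: "Kw > 0" "\<And>v w. norm (wedge v w :: real^'n^'n) \<le> Kw * norm v * norm w"
    using wedge_bound by blast
  obtain D0 where D0: "\<And>h. h \<in> carrierG \<Longrightarrow> ip h h = 1 \<Longrightarrow> dcc N 0 h \<le> D0"
    using chow_bound[OF N A] by blast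
  define D where "D = max D0 0"
  have D: "D \<ge> 0" "\<And>h. h \<in> carrierG \<Longrightarrow> ip h h = 1 \<Longrightarrow> dcc N 0 h \<le> D"
  proof -
    show "D \<ge> 0" by (simp add: D_def)
    have "D0 \<le> D" by (simp add: D_def)
    then show "\<And>h. h \<in> carrierG \<Longrightarrow> ip h h = 1 \<Longrightarrow> dcc N 0 h \<le> D"
      using D0 by (meson order_trans)
  qed
  define M where "M = 1 + 2 * Kw * D / cN"
  have M: "M \<ge> 1" using Kw(1) D(1) cN(1) by (simp add: M_def)
  define K where "K = sqrt CI / sqrt cG * M + 1"
  have ipnn: "ip p p \<ge> 0" if "p \<in> carrierG" for p
  proof -
    have "0 \<le> cG * (norm p)\<^sup>2" using cG(1) by simp
    then show ?thesis using cG(2)[OF that] by linarith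
  qed
  show ?thesis
  proof (rule exI[of _ K], intro allI impI)
    fix \<epsilon> :: real and \<gamma> :: "real \<Rightarrow> 'n grp" and P :: "(real^'n) set"
    assume e: "\<epsilon> > 0"
    assume H: "is_geodesic N 0 (\<gamma> 1) \<gamma> \<and> d_eu ip (\<gamma> 1) 0 = 1 \<and> subspace P
           \<and> (\<forall>t\<in>{0..1}. hdist_eu ip (proj (\<gamma> t)) P < \<epsilon>)"
    then have geo: "is_geodesic N 0 (\<gamma> 1) \<gamma>" and d1: "d_eu ip (\<gamma> 1) 0 = 1" and P: "subspace P"
      and hd: "\<And>t. t \<in> {0..1} \<Longrightarrow> hdist_eu ip (proj (\<gamma> t)) P < \<epsilon>" by auto
    obtain u where u: "admissible u" "\<And>t. t \<in> {0..1} \<Longrightarrow> \<gamma> t = gmul 0 (hcurve u t)"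
        "sf_length N u = dcc N 0 (\<gamma> 1)"
      using geo unfolding is_geodesic_def by blast
    have ua: "u absolutely_integrable_on {0..1}" using u(1) by (simp add: admissible_def)
    define X where "X s = integral {0..s} u" for s
    define Y1 where "Y1 = integral {0..1} (\<lambda>s. wedge (X s) (u s))"
    have g: "\<gamma> t = hcurve u t" if "t \<in> {0..1}" for t using u(2)[OF that] by (simp add: gmul_0)
    have g1: "\<gamma> 1 = (X 1, (1/2) *\<^sub>R Y1)" using g[of 1] by (simp add: hcurve_def X_def Y1_def)
    have g1c: "\<gamma> 1 \<in> carrierG" using g[of 1] by (simp add: carrierG_iff hcurve_antisym)
    have ip1: "ip (\<gamma> 1) (\<gamma> 1) = 1" using d1 by (simp add: d_eu_def)
    have L: "sf_length N u \<le> D" using u(3) D(2)[OF g1c ip1] by simp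
    define U where "U = integral {0..1} (\<lambda>s. norm (u s))"
    have nuint: "(\<lambda>s. norm (u s)) integrable_on {0..1}" using ua by (simp add: absolutely_integrable_on_def)
    have U: "U \<le> D / cN"
    proof -
      have "integral {0..1} (\<lambda>s. cN * norm (u s)) \<le> integral {0..1} (\<lambda>s. N (u s))"
      proof (rule integral_le)
        show "(\<lambda>s. cN * norm (u s)) integrable_on {0..1}" using nuint cN(1) by simp
        show "(\<lambda>s. N (u s)) integrable_on {0..1}"
          using N_integrable[OF N ua] set_lebesgue_integral_eq_integral(1) by blast
      qed (use cN(3) in auto)
      then have "cN * U \<le> D" using L by (simp add: U_def sf_length_def)
      then show ?thesis using cN(1) by (simp add: field_simps)
    qed
    obtain Pr where Pr: "linear Pr" "\<And>x. Pr x \<in> P" "\<And>x w. w \<in> P \<Longrightarrow> (x - Pr x) \<bullet> w = 0"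
      using proj_exists[OF P] by blast
    note pp = proj_props[OF P Pr]
    define \<delta> where "\<delta> = \<epsilon> / sqrt cG"
    have del: "norm (integral {0..s} u - Pr (integral {0..s} u)) \<le> \<delta>" if s: "s \<in> {0..1}" for s
    proof -
      have "proj (\<gamma> s) = X s" using g[OF s] by (simp add: proj_def hcurve_def X_def)
      then have "hdist_eu ip (X s) P < \<epsilon>" using hd[OF s] by simp
      then have lt: "Inf {d_eu ip (X s, 0) (y, 0) | y. y \<in> P} < \<epsilon>" by (simp add: hdist_eu_def)
      have ne: "{d_eu ip (X s, 0) (y, 0) | y. y \<in> P} \<noteq> {}" using subspace_0[OF P] by blast
      obtain z where z: "z \<in> {d_eu ip (X s, 0) (y, 0) | y. y \<in> P}" "z < \<epsilon>"
        using cInf_lessD[OF ne lt] by (elim bexE)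
      then obtain y where y: "y \<in> P" "d_eu ip (X s, 0) (y, 0) < \<epsilon>"
        by auto
      have pc: "(X s - y, 0) \<in> carrierG" by (simp add: carrierG_iff antisym_mat_def)
      have "sqrt cG * norm (X s - y) = sqrt (cG * (norm (X s - y, 0::real^'n^'n))\<^sup>2)"
        using cG(1) by (simp add: real_sqrt_mult norm_Pair)
      also have "\<dots> \<le> sqrt (ip (X s - y, 0) (X s - y, 0))"
        using cG(2)[OF pc] by simp
      also have "\<dots> = d_eu ip (X s, 0) (y, 0)" by (simp add: d_eu_def)
      finally have "sqrt cG * norm (X s - y) < \<epsilon>" using y(2) by simp
      then have "norm (X s - y) < \<delta>" using cG(1) by (simp add: \<delta>_def field_simps)
      moreover have "norm (X s - Pr (X s)) \<le> norm (X s - y)" by (rule pp(4)) (use y(1) in auto)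
      ultimately show ?thesis by (simp add: X_def)
    qed
    have est: "norm (Y1 - integral {0..1} (\<lambda>s. wedge (Pr (X s)) (Pr (u s)))) \<le> 3 * Kw * \<delta> * U"
      and Zs: "integral {0..1} (\<lambda>s. wedge (Pr (X s)) (Pr (u s))) \<in> span {wedge v w | v w. v \<in> P \<and> w \<in> P}"
      using main_estimate[OF ua P Pr del Kw(2) Kw(1)] by (simp_all add: Y1_def X_def U_def)
    define Z where "Z = integral {0..1} (\<lambda>s. wedge (Pr (X s)) (Pr (u s)))"
    define q where "q = (Pr (X 1), (1/2) *\<^sub>R Z)"
    have q: "q \<in> layer_sub P" using Zs Pr(2) by (simp add: q_def layer_sub_def Z_def span_mul)
    have sd: "setdist_eu ip (\<gamma> 1) (layer_sub P) \<le> d_eu ip (\<gamma> 1) q"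
      unfolding setdist_eu_def
    proof (rule cInf_lower)
      show "d_eu ip (\<gamma> 1) q \<in> {d_eu ip (\<gamma> 1) q |q. q \<in> layer_sub P}" using q by blast
      show "bdd_below {d_eu ip (\<gamma> 1) q |q. q \<in> layer_sub P}"
      proof (rule bdd_belowI[of _ 0])
        fix z assume "z \<in> {d_eu ip (\<gamma> 1) q |q. q \<in> layer_sub P}"
        then obtain q' where q': "q' \<in> layer_sub P" "z = d_eu ip (\<gamma> 1) q'" by blast
        have "\<gamma> 1 - q' \<in> carrierG"
          using g1c layer_sub_carrier[OF q'(1)] by (simp add: carrierG_iff antisym_diff)
        then show "0 \<le> z" using q'(2) ipnn by (simp add: d_eu_def)
      qed
    qed
    define d where "d = \<gamma> 1 - q"
    have dd: "d = (X 1 - Pr (X 1), (1/2) *\<^sub>R (Y1 - Z))" by (simp add: d_def g1 q_def scaleR_diff_right)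
    have nd: "norm d \<le> \<delta> * M"
    proof -
      have "norm d \<le> norm (X 1 - Pr (X 1)) + norm ((1/2) *\<^sub>R (Y1 - Z))"
        unfolding dd by (rule norm_Pair_le)
      also have "\<dots> \<le> \<delta> + (1/2) * (3 * Kw * \<delta> * U)"
        using del[of 1] est by (simp add: X_def Z_def)
      also have "\<dots> \<le> \<delta> * M"
      proof -
        have d0: "\<delta> \<ge> 0" using e cG(1) by (simp add: \<delta>_def)
        have "Kw * \<delta> * U \<le> Kw * \<delta> * (D / cN)"
          using U Kw(1) d0 by (intro mult_left_mono) auto
        then have "(1/2) * (3 * Kw * \<delta> * U) \<le> 2 * Kw * \<delta> * (D / cN)"
        proof -
          have "0 \<le> Kw * \<delta> * (D / cN)" using Kw(1) d0 D(1) cN(1) by simp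
          have key: "\<And>A B :: real. 0 \<le> B \<Longrightarrow> A \<le> B \<Longrightarrow> 1 / 2 * (3 * A) \<le> 2 * B" by linarith
          show ?thesis using key[OF \<open>0 \<le> Kw * \<delta> * (D / cN)\<close> \<open>Kw * \<delta> * U \<le> Kw * \<delta> * (D / cN)\<close>]
            by (simp add: mult.assoc)
        qed
        then show ?thesis by (simp add: M_def algebra_simps)
      qed
      finally show ?thesis .
    qed
    have "d_eu ip (\<gamma> 1) q = sqrt (ip d d)" by (simp add: d_eu_def d_def)
    also have "\<dots> \<le> sqrt (CI * (norm d)\<^sup>2)"
      using CI(2)[of d d] by (intro real_sqrt_le_mono) (simp add: power2_eq_square ac_simps)
    also have "\<dots> = sqrt CI * norm d" using CI(1) by (simp add: real_sqrt_mult)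
    also have "\<dots> \<le> sqrt CI * (\<delta> * M)" using nd CI(1) by (intro mult_left_mono) auto
    also have "\<dots> = (sqrt CI / sqrt cG * M) * \<epsilon>" by (simp add: \<delta>_def)
    also have "\<dots> < K * \<epsilon>" using e by (simp add: K_def distrib_right)
    finally show "setdist_eu ip (\<gamma> 1) (layer_sub P) < K * \<epsilon>" using sd by simp
  qed
qed

end
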